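(* Let $N=(S,T,F,M_0,\ell)$ be a Petri net and $N'=(S',T',F',M'_0,\ell')$ be a plain net with $S'\subseteq S$ and $M'_0=M_0\upharpoonright S'$. Suppose there exist sets $T_+ \subseteq T$ and $T_-\subseteq T$ and a class $\mathcal{NF}\subseteq \mathbb{Z}^T$ (of finite signed multisets of transitions), such that (1) $F\upharpoonright(S\cup T_+)$ is acyclic; (2) $F\upharpoonright(S\cup T_-)$ is acyclic; (3) for every $t\in T$ with $\ell(t)\neq\tau$ there is a $t'\in T'$ with $\ell'(t')=\ell(t)$ such that ${}^\bullet t' \leq {}^*t$ and there is a finite multiset $G\in\mathbb{N}^T$ with $\ell(G)\equiv\emptyset$ and $[\![t']\!]=[\![t+G]\!]$; here ${}^*t$ is the multiset of faithful origins of $t$ w.r.t. $T_+$ and $S'\cup\{s\in S \mid M_0(s)>0\}$; (4) there exists a function $f:T\rightarrow\mathbb{N}$ with $f(t)>0$ for all $t\in T$, extended linearly to finite signed multisets ($f(G)=\sum_t G(t)\cdot f(t)$), such that for each finite $G\in \mathbb{Z}^T$ with $\ell(G)\equiv\emptyset$ there is a finite $H\in \mathcal{NF}$ with $\ell(H)\equiv\emptyset$, $[\![H]\!]=[\![G]\!]$ and $f(H)=f(G)$; and (5) for every reachable marking $M'$ of $N'$ there is a finite multiset $H_{M'}\in\mathbb{N}^{T_+}$ with $\ell(H_{M'})\equiv\emptyset$, such that for each finite $H\in \mathcal{NF}$ for which $M:=M'+(M_0-M'_0)+[\![H]\!]$ is a reachable marking of $N$ one has: (a) $M_{M'}:=M'+(M_0-M'_0)+[\![H_{M'}]\!]\in\mathbb{N}^S$;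 (b) if $M'$ enables a transition labelled $a\in\mathrm{Act}$ then $M_{M'}$ enables a transition labelled $a$; (c) $H\leq H_{M'}$; (d) if $H(u)<0$ then $u\in T_-$; (e) if $H(u)<0$ and $H(t)>0$ then ${}^\bullet u \cap {}^\bullet t = \emptyset$; (f) if $H(u)<0$ and $M$ enables $t$ with $\ell(t)\neq\tau$ then ${}^\bullet u \cap {}^\bullet t = \emptyset$. Then $N$ and $N'$ are interleaving branching bisimilar with explicit divergence.
   Context: Petri nets are labelled over $\mathrm{Act}\cup\{\tau\}$ with $\tau$ the invisible action; a net is plain if its labelling is injective and no transition is labelled $\tau$. For a transition $t$, ${}^\bullet t$ and $t^\bullet$ are the multisets of pre- and postplaces (given by arc weights), and the token replacement is $[\![t]\!]=t^\bullet-{}^\bullet t$, extended linearly to finite signed multisets of transitions. For a signed multiset $G$ of transitions, $\ell(G)\equiv\emptyset$ means every transition $t$ with $G(t)\neq 0$ has $\ell(t)=\tau$. Faithful origins: a path is an alternating sequence $x_0x_1\cdots x_n$ of places and transitions with $F(x_i,x_{i+1})>0$, its arc weight being $\prod_i F(x_i,x_{i+1})$; a place $s$ is faithful w.r.t. $T_+$ and $S_+$ iff $|\{s\}\cap S_+|+\sum_{t\in T_+}F(t,s)=1$; a path is faithful iff all nodes $x_i$ with $0\le i<n$ are transitions in $T_+$ or faithful places; and ${}^*x(s)$ is the supremum of the arc weights of faithful paths from $s\in S_+$ to $x$ (0 if none). Interleaving branching bisimilarity with explicit divergence is branching bisimilarity with explicit divergence of the labelled transition systems whose states are markings and whose transitions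 are single firings $M[t\rangle M'$ labelled $\ell(t)$. *)

theory Defs
  imports Main "HOL-Library.Extended_Nat"
begin

text \<open>Places have type 's, transitions type 't (so S and T are disjoint),
  visible actions type 'a; the label None is the invisible action tau.
  pre t s = F(s,t), post t s = F(t,s).\<close>

record ('s, 't, 'a) pnet =
  places :: "'s set"
  trans  :: "'t set"
  pre    :: "'t \<Rightarrow> 's \<Rightarrow> nat"
  post   :: "'t \<Rightarrow> 's \<Rightarrow> nat"
  init   :: "'s \<Rightarrow> nat"
  lab    :: "'t \<Rightarrow> 'a option"

definition wf_net :: "('s, 't, 'a) pnet \<Rightarrow> bool" where
  "wf_net N \<longleftrightarrow>
     (\<forall>t s. pre N t s \<noteq> 0 \<longrightarrow> t \<in> trans N \<and> s \<in> places N) \<and>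
     (\<forall>t s. post N t s \<noteq> 0 \<longrightarrow> t \<in> trans N \<and> s \<in> places N) \<and>
     (\<forall>s. init N s \<noteq> 0 \<longrightarrow> s \<in> places N)"

definition plain :: "('s, 't, 'a) pnet \<Rightarrow> bool" where
  "plain N \<longleftrightarrow> inj_on (lab N) (trans N) \<and> (\<forall>t \<in> trans N. lab N t \<noteq> None)"

definition enabled :: "('s, 't, 'a) pnet \<Rightarrow> ('s \<Rightarrow> nat) \<Rightarrow> 't \<Rightarrow> bool" where
  "enabled N M t \<longleftrightarrow> t \<in> trans N \<and> (\<forall>s. pre N t s \<le> M s)"

definition fire :: "('s, 't, 'a) pnet \<Rightarrow> ('s \<Rightarrow> nat) \<Rightarrow> 't \<Rightarrow> ('s \<Rightarrow> nat)" where
  "fire N M t = (\<lambda>s. M s - pre N t s + post N t s)"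

definition net_step :: "('s, 't, 'a) pnet \<Rightarrow> ('s \<Rightarrow> nat) \<Rightarrow> 'a option \<Rightarrow> ('s \<Rightarrow> nat) \<Rightarrow> bool" where
  "net_step N M \<alpha> M' \<longleftrightarrow> (\<exists>t. enabled N M t \<and> lab N t = \<alpha> \<and> M' = fire N M t)"

definition reachable :: "('s, 't, 'a) pnet \<Rightarrow> ('s \<Rightarrow> nat) \<Rightarrow> bool" where
  "reachable N M \<longleftrightarrow> (\<lambda>M1 M2. \<exists>\<alpha>. net_step N M1 \<alpha> M2)\<^sup>*\<^sup>* (init N) M"

definition fin_sms :: "'t set \<Rightarrow> ('t \<Rightarrow> int) \<Rightarrow> bool" where
  "fin_sms X G \<longleftrightarrow> finite {t. G t \<noteq> 0} \<and> {t. G t \<noteq> 0} \<subseteq> X"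

definition tokrep :: "('s, 't, 'a) pnet \<Rightarrow> 't \<Rightarrow> 's \<Rightarrow> int" where
  "tokrep N t = (\<lambda>s. int (post N t s) - int (pre N t s))"

definition tokrep_ms :: "('s, 't, 'a) pnet \<Rightarrow> ('t \<Rightarrow> int) \<Rightarrow> 's \<Rightarrow> int" where
  "tokrep_ms N G = (\<lambda>s. \<Sum>t \<in> {t. G t \<noteq> 0}. G t * tokrep N t s)"

definition invisible :: "('s, 't, 'a) pnet \<Rightarrow> ('t \<Rightarrow> int) \<Rightarrow> bool" where
  "invisible N G \<longleftrightarrow> (\<forall>t. G t \<noteq> 0 \<longrightarrow> lab N t = None)"

definition fval :: "('t \<Rightarrow> nat) \<Rightarrow> ('t \<Rightarrow> int) \<Rightarrow> int" where
  "fval f G = (\<Sum>t \<in> {t. G t \<noteq> 0}. G t * int (f t))"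

definition flow :: "('s, 't, 'a) pnet \<Rightarrow> ('s + 't) \<Rightarrow> ('s + 't) \<Rightarrow> nat" where
  "flow N x y = (case (x, y) of
      (Inl s, Inr t) \<Rightarrow> pre N t s
    | (Inr t, Inl s) \<Rightarrow> post N t s
    | _ \<Rightarrow> 0)"

definition flow_rel :: "('s, 't, 'a) pnet \<Rightarrow> (('s + 't) \<times> ('s + 't)) set" where
  "flow_rel N = {(x, y). flow N x y > 0}"

definition flow_restr :: "('s, 't, 'a) pnet \<Rightarrow> 't set \<Rightarrow> (('s + 't) \<times> ('s + 't)) set" where
  "flow_restr N X = Restr (flow_rel N) (Inl ` places N \<union> Inr ` X)"

definition is_path :: "('s, 't, 'a) pnet \<Rightarrow> ('s + 't) list \<Rightarrow> bool" where
  "is_path N xs \<longleftrightarrow> xs \<noteq> [] \<and> (\<forall>i. Suc i < length xs \<longrightarrow> flow N (xs ! i) (xs ! Suc i) > 0)"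

definition path_weight :: "('s, 't, 'a) pnet \<Rightarrow> ('s + 't) list \<Rightarrow> nat" where
  "path_weight N xs = (\<Prod>i < length xs - 1. flow N (xs ! i) (xs ! Suc i))"

text \<open>|{s} \<inter> Sp| + sum_{t in Tp} F(t,s) = 1 (the sum taken over the transitions
  with nonzero weight, which must be finitely many).\<close>
definition faithful_place :: "('s, 't, 'a) pnet \<Rightarrow> 't set \<Rightarrow> 's set \<Rightarrow> 's \<Rightarrow> bool" where
  "faithful_place N Tp Sp s \<longleftrightarrow>
     finite {t \<in> Tp. post N t s > 0} \<and>
     (if s \<in> Sp then 1 else 0) + (\<Sum>t \<in> {t \<in> Tp. post N t s > 0}. post N t s) = (1::nat)"

definition faithful_path :: "('s, 't, 'a) pnet \<Rightarrow> 't set \<Rightarrow> 's set \<Rightarrow> ('s + 't) list \<Rightarrow> bool" where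
  "faithful_path N Tp Sp xs \<longleftrightarrow> is_path N xs \<and>
     (\<forall>i. Suc i < length xs \<longrightarrow>
        (case xs ! i of Inr t \<Rightarrow> t \<in> Tp | Inl s \<Rightarrow> faithful_place N Tp Sp s))"

definition origins :: "('s, 't, 'a) pnet \<Rightarrow> 't set \<Rightarrow> 's set \<Rightarrow> ('s + 't) \<Rightarrow> 's \<Rightarrow> enat" where
  "origins N Tp Sp x s = (if s \<in> Sp then
      Sup {enat (path_weight N xs) | xs. faithful_path N Tp Sp xs \<and> hd xs = Inl s \<and> last xs = x}
    else 0)"

definition bb_transfer :: "('p \<Rightarrow> 'b option \<Rightarrow> 'p \<Rightarrow> bool) \<Rightarrow> ('q \<Rightarrow> 'b option \<Rightarrow> 'q \<Rightarrow> bool)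
    \<Rightarrow> ('p \<Rightarrow> 'q \<Rightarrow> bool) \<Rightarrow> bool" where
  "bb_transfer A B R \<longleftrightarrow>
     (\<forall>p q \<alpha> p'. R p q \<and> A p \<alpha> p' \<longrightarrow>
        (\<alpha> = None \<and> R p' q) \<or>
        (\<exists>q1 q2. (\<lambda>x y. B x None y)\<^sup>*\<^sup>* q q1 \<and> B q1 \<alpha> q2 \<and> R p q1 \<and> R p' q2)) \<and>
     (\<forall>p q ps. R p q \<and> ps 0 = p \<and> (\<forall>k. A (ps k) None (ps (Suc k))) \<and> (\<forall>k. R (ps k) q) \<longrightarrow>
        (\<exists>qs. qs 0 = q \<and> (\<forall>l. B (qs l) None (qs (Suc l))) \<and> (\<forall>k l. R (ps k) (qs l))))"

definition bbd_bisim :: "('p \<Rightarrow> 'b option \<Rightarrow> 'p \<Rightarrow> bool) \<Rightarrow> ('q \<Rightarrow> 'b option \<Rightarrow> 'q \<Rightarrow> bool)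
    \<Rightarrow> ('p \<Rightarrow> 'q \<Rightarrow> bool) \<Rightarrow> bool" where
  "bbd_bisim A B R \<longleftrightarrow> bb_transfer A B R \<and> bb_transfer B A (conversep R)"

definition int_bbd_bisimilar :: "('s, 't, 'a) pnet \<Rightarrow> ('s, 'u, 'a) pnet \<Rightarrow> bool" where
  "int_bbd_bisimilar N N' \<longleftrightarrow>
     (\<exists>R. bbd_bisim (net_step N) (net_step N') R \<and> R (init N) (init N'))"

end

theory Submission
  imports Defs
begin



lemma tokrep_ms_B:
  assumes "finite B" "{t. G t \<noteq> 0} \<subseteq> B"
  shows "tokrep_ms N G s = (\<Sum>t\<in>B. G t * tokrep N t s)"
  unfolding tokrep_ms_def by (rule sum.mono_neutral_left) (use assms in auto)

lemma fval_B:
  assumes "finite B" "{t. G t \<noteq> 0} \<subseteq> B"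
  shows "fval f G = (\<Sum>t\<in>B. G t * int (f t))"
  unfolding fval_def by (rule sum.mono_neutral_left) (use assms in auto)

lemma supp_add: "{u. G1 u + G2 u \<noteq> (0::int)} \<subseteq> {u. G1 u \<noteq> 0} \<union> {u. G2 u \<noteq> 0}" by auto
lemma supp_diff: "{u. G1 u - G2 u \<noteq> (0::int)} \<subseteq> {u. G1 u \<noteq> 0} \<union> {u. G2 u \<noteq> 0}" by auto

lemma tokrep_ms_add:
  assumes "finite {u. G1 u \<noteq> 0}" "finite {u. G2 u \<noteq> 0}"
  shows "tokrep_ms N (\<lambda>u. G1 u + G2 u) s = tokrep_ms N G1 s + tokrep_ms N G2 s"
proof -
  let ?B = "{u. G1 u \<noteq> 0} \<union> {u. G2 u \<noteq> 0}"
  have "finite ?B" using assms by simp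
  then show ?thesis
    using tokrep_ms_B[of ?B G1 N s] tokrep_ms_B[of ?B G2 N s] tokrep_ms_B[of ?B "\<lambda>u. G1 u + G2 u" N s, OF _ supp_add]
    by (auto simp: distrib_right sum.distrib)
qed

lemma tokrep_ms_diff:
  assumes "finite {u. G1 u \<noteq> 0}" "finite {u. G2 u \<noteq> 0}"
  shows "tokrep_ms N (\<lambda>u. G1 u - G2 u) s = tokrep_ms N G1 s - tokrep_ms N G2 s"
proof -
  let ?B = "{u. G1 u \<noteq> 0} \<union> {u. G2 u \<noteq> 0}"
  have "finite ?B" using assms by simp
  then show ?thesis
    using tokrep_ms_B[of ?B G1 N s] tokrep_ms_B[of ?B G2 N s] tokrep_ms_B[of ?B "\<lambda>u. G1 u - G2 u" N s, OF _ supp_diff]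
    by (simp add: left_diff_distrib sum_subtractf)
qed

lemma tokrep_ms_delta: "tokrep_ms N (\<lambda>u. if u = t then 1 else 0) s = tokrep N t s"
  unfolding tokrep_ms_def by simp

lemma fval_add:
  assumes "finite {u. G1 u \<noteq> 0}" "finite {u. G2 u \<noteq> 0}"
  shows "fval f (\<lambda>u. G1 u + G2 u) = fval f G1 + fval f G2"
proof -
  let ?B = "{u. G1 u \<noteq> 0} \<union> {u. G2 u \<noteq> 0}"
  have "finite ?B" using assms by simp
  then show ?thesis
    using fval_B[of ?B G1] fval_B[of ?B G2] fval_B[of ?B "\<lambda>u. G1 u + G2 u", OF _ supp_add]
    by (auto simp: distrib_right sum.distrib)
qed

lemma fval_delta: "fval f (\<lambda>u. if u = t then 1 else 0) = int (f t)"
  unfolding fval_def by simp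

lemma fval_mono:
  assumes "finite {u. G1 u \<noteq> 0}" "finite {u. G2 u \<noteq> 0}" "\<forall>u. G1 u \<le> G2 u"
  shows "fval f G1 \<le> fval f G2"
proof -
  let ?B = "{u. G1 u \<noteq> 0} \<union> {u. G2 u \<noteq> 0}"
  have "finite ?B" using assms by simp
  then have "fval f G1 = (\<Sum>t\<in>?B. G1 t * int (f t))" "fval f G2 = (\<Sum>t\<in>?B. G2 t * int (f t))"
    using fval_B[of ?B G1] fval_B[of ?B G2] by auto
  moreover have "(\<Sum>t\<in>?B. G1 t * int (f t)) \<le> (\<Sum>t\<in>?B. G2 t * int (f t))"
    by (rule sum_mono) (use assms(3) in \<open>auto intro: mult_right_mono\<close>)
  ultimately show ?thesis by simp
qed

lemma fire_int: "enabled N M t \<Longrightarrow> int (fire N M t s) = int (M s) + tokrep N t s"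
proof -
  assume "enabled N M t"
  then have "pre N t s \<le> M s" unfolding enabled_def by auto
  then show ?thesis unfolding fire_def tokrep_def by (simp add: of_nat_diff)
qed

lemma reach_step: "reachable N M \<Longrightarrow> net_step N M \<alpha> M2 \<Longrightarrow> reachable N M2"
  unfolding reachable_def by (metis (mono_tags, lifting) rtranclp.rtrancl_into_rtrancl)

lemma reach_taus: "(\<lambda>x y. net_step N x None y)\<^sup>*\<^sup>* M M2 \<Longrightarrow> reachable N M \<Longrightarrow> reachable N M2"
  by (induction rule: rtranclp_induct) (auto intro: reach_step)

lemma reach_zero:
  assumes "wf_net N" "reachable N M" "s \<notin> places N" shows "M s = 0"
proof -
  have "(\<lambda>M1 M2. \<exists>\<alpha>. net_step N M1 \<alpha> M2)\<^sup>*\<^sup>* (init N) M" using assms(2) unfolding reachable_def .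
  then show ?thesis
  proof (induction rule: rtranclp_induct)
    case base then show ?case using assms(1,3) unfolding wf_net_def by auto
  next
    case (step y z)
    then obtain t where "z = fire N y t" unfolding net_step_def by auto
    moreover have "post N t s = 0" using assms(1,3) unfolding wf_net_def by auto
    ultimately show ?case using step by (simp add: fire_def)
  qed
qed




lemma min_elem:
  assumes wf: "wf_net N" and ac: "acyclic (flow_restr N T0)" and fin: "finite A"
    and sub: "A \<subseteq> T0" and ne: "A \<noteq> {}"
  shows "\<exists>t\<in>A. \<forall>w\<in>A. \<forall>p. \<not> (post N w p > 0 \<and> pre N t p > 0)"
proof -
  define r where "r = {(w, t). w \<in> A \<and> t \<in> A \<and> (\<exists>p. post N w p > 0 \<and> pre N t p > 0)}"
  have "r \<subseteq> A \<times> A" unfolding r_def by auto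
  then have finr: "finite r" using fin by (meson finite_SigmaI finite_subset)
  have b1: "(Inr w, Inr t) \<in> (flow_restr N T0)\<^sup>+" if "(w, t) \<in> r" for w t
  proof -
    from that obtain p where wp: "w \<in> A" "t \<in> A" "post N w p > 0" "pre N t p > 0"
      unfolding r_def by auto
    then have pp: "p \<in> places N" using wf unfolding wf_net_def by (metis not_gr0)
    have "(Inr w, Inl p) \<in> flow_restr N T0"
      using wp pp sub unfolding flow_restr_def flow_rel_def flow_def by auto
    moreover have "(Inl p, Inr t) \<in> flow_restr N T0"
      using wp pp sub unfolding flow_restr_def flow_rel_def flow_def by auto
    ultimately show ?thesis by auto
  qed
  have tr: "(Inr w, Inr t) \<in> (flow_restr N T0)\<^sup>+" if "(w, t) \<in> r\<^sup>+" for w t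
    using that
  proof (induction rule: trancl_induct)
    case (base y) then show ?case using b1 by blast
  next
    case (step y z) then show ?case using b1 by (meson trancl_trans)
  qed
  have "acyclic r" unfolding acyclic_def
  proof
    fix x show "(x, x) \<notin> r\<^sup>+" using tr ac unfolding acyclic_def by blast
  qed
  then have "wf r" using finr by (simp add: finite_acyclic_wf)
  obtain a where "a \<in> A" using ne by auto
  from wfE_min[OF \<open>wf r\<close> this] obtain z where "z \<in> A" "\<And>y. (y, z) \<in> r \<Longrightarrow> y \<notin> A" by blast
  then show ?thesis unfolding r_def by blast
qed

lemma fire_lemma:
  assumes wf: "wf_net N" and ac: "acyclic (flow_restr N T0)" and T0: "T0 \<subseteq> trans N"
    and finB: "finite B"
  shows "\<forall>K M. (\<forall>t. K t \<ge> 0) \<and> {t. K t \<noteq> 0} \<subseteq> B \<and> {t. K t \<noteq> 0} \<subseteq> T0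
      \<and> (\<forall>t. K t \<noteq> 0 \<longrightarrow> lab N t = None) \<and> (\<Sum>t\<in>B. K t) = int n
      \<and> (\<forall>p t. K t \<noteq> 0 \<and> pre N t p > 0 \<longrightarrow> int (M p) + tokrep_ms N K p \<ge> 0)
      \<longrightarrow> (\<exists>M2. (\<lambda>x y. net_step N x None y)\<^sup>*\<^sup>* M M2 \<and>
              (\<forall>p. int (M2 p) = int (M p) + tokrep_ms N K p))"
proof (induction n)
  case 0
  show ?case
  proof (intro allI impI)
    fix K M
    assume h: "(\<forall>t. K t \<ge> 0) \<and> {t. K t \<noteq> 0} \<subseteq> B \<and> {t. K t \<noteq> 0} \<subseteq> T0
      \<and> (\<forall>t. K t \<noteq> 0 \<longrightarrow> lab N t = None) \<and> (\<Sum>t\<in>B. K t) = int 0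
      \<and> (\<forall>p t. K t \<noteq> 0 \<and> pre N t p > 0 \<longrightarrow> int (M p) + tokrep_ms N K p \<ge> 0)"
    then have "\<forall>t\<in>B. K t = 0" using sum_nonneg_eq_0_iff[OF finB, of K] by auto
    then have "\<forall>t. K t = 0" using h by auto
    then have "tokrep_ms N K p = 0" for p unfolding tokrep_ms_def by simp
    then show "\<exists>M2. (\<lambda>x y. net_step N x None y)\<^sup>*\<^sup>* M M2 \<and>
              (\<forall>p. int (M2 p) = int (M p) + tokrep_ms N K p)" by auto
  qed
next
  case (Suc n)
  show ?case
  proof (intro allI impI)
    fix K M
    assume h: "(\<forall>t. K t \<ge> 0) \<and> {t. K t \<noteq> 0} \<subseteq> B \<and> {t. K t \<noteq> 0} \<subseteq> T0
      \<and> (\<forall>t. K t \<noteq> 0 \<longrightarrow> lab N t = None) \<and> (\<Sum>t\<in>B. K t) = int (Suc n)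
      \<and> (\<forall>p t. K t \<noteq> 0 \<and> pre N t p > 0 \<longrightarrow> int (M p) + tokrep_ms N K p \<ge> 0)"
    let ?A = "{t. K t \<noteq> 0}"
    have finA: "finite ?A" using h finB finite_subset by blast
    have "?A \<noteq> {}"
    proof
      assume "?A = {}" then have "\<forall>t. K t = 0" by auto
      then show False using h by simp
    qed
    then obtain t where tA: "t \<in> ?A" and tmin: "\<forall>w\<in>?A. \<forall>p. \<not> (post N w p > 0 \<and> pre N t p > 0)"
      using min_elem[OF wf ac finA] h by blast
    have "K t \<noteq> 0" "K t \<ge> 0" using tA h by auto
    then have Kt: "K t \<ge> 1" by linarith
    have en: "enabled N M t"
      unfolding enabled_def
    proof
      show "t \<in> trans N" using tA h T0 by auto
      show "\<forall>p. pre N t p \<le> M p"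
      proof
        fix p
        show "pre N t p \<le> M p"
        proof (cases "pre N t p > 0")
          case False then show ?thesis by simp
        next
          case True
          have "tokrep_ms N K p = (\<Sum>w\<in>?A. K w * tokrep N w p)" unfolding tokrep_ms_def ..
          also have "\<dots> = (\<Sum>w\<in>?A. - (K w * int (pre N w p)))"
          proof (rule sum.cong)
            fix x assume "x \<in> ?A"
            then have "post N x p = 0" using tmin True by (meson gr0I)
            then show "K x * tokrep N x p = - (K x * int (pre N x p))" by (simp add: tokrep_def)
          qed simp
          also have "\<dots> = - (\<Sum>w\<in>?A. K w * int (pre N w p))" by (simp add: sum_negf)
          finally have e1: "tokrep_ms N K p = - (\<Sum>w\<in>?A. K w * int (pre N w p))" .
          have "(\<Sum>w\<in>?A. K w * int (pre N w p)) \<ge> K t * int (pre N t p)"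
            by (rule member_le_sum) (use tA h finA in auto)
          then have "tokrep_ms N K p \<le> - (K t * int (pre N t p))" using e1 by linarith
          moreover have "K t * int (pre N t p) \<ge> int (pre N t p)" using Kt
            by (simp add: mult_le_cancel_right1)
          moreover have "int (M p) + tokrep_ms N K p \<ge> 0" using h tA True by auto
          ultimately show ?thesis by linarith
        qed
      qed
    qed
    define K1 where "K1 = K(t := K t - 1)"
    define M1 where "M1 = fire N M t"
    have tB: "t \<in> B" using tA h by auto
    have tokK: "tokrep_ms N K p = tokrep_ms N K1 p + tokrep N t p" for p
    proof -
      have s1: "tokrep_ms N K p = (\<Sum>w\<in>B. K w * tokrep N w p)" by (rule tokrep_ms_B[OF finB]) (use h in auto)
      have s2: "tokrep_ms N K1 p = (\<Sum>w\<in>B. K1 w * tokrep N w p)"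
        by (rule tokrep_ms_B[OF finB]) (use h tB in \<open>auto simp: K1_def\<close>)
      have r1: "(\<Sum>w\<in>B. K w * tokrep N w p) = K t * tokrep N t p + (\<Sum>w\<in>B-{t}. K w * tokrep N w p)"
        by (rule sum.remove[OF finB tB])
      have r2: "(\<Sum>w\<in>B. K1 w * tokrep N w p) = K1 t * tokrep N t p + (\<Sum>w\<in>B-{t}. K1 w * tokrep N w p)"
        by (rule sum.remove[OF finB tB])
      have r3: "(\<Sum>w\<in>B-{t}. K1 w * tokrep N w p) = (\<Sum>w\<in>B-{t}. K w * tokrep N w p)"
        by (rule sum.cong) (auto simp: K1_def)
      have "K1 t = K t - 1" by (simp add: K1_def)
      then have "K t * tokrep N t p = tokrep N t p + K1 t * tokrep N t p" by (metis add.commute distrib_right diff_add_cancel mult_1)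
      then show ?thesis using s1 s2 r1 r2 r3 by simp
    qed
    have "\<forall>K M. (\<forall>t. K t \<ge> 0) \<and> {t. K t \<noteq> 0} \<subseteq> B \<and> {t. K t \<noteq> 0} \<subseteq> T0
      \<and> (\<forall>t. K t \<noteq> 0 \<longrightarrow> lab N t = None) \<and> (\<Sum>t\<in>B. K t) = int n
      \<and> (\<forall>p t. K t \<noteq> 0 \<and> pre N t p > 0 \<longrightarrow> int (M p) + tokrep_ms N K p \<ge> 0)
      \<longrightarrow> (\<exists>M2. (\<lambda>x y. net_step N x None y)\<^sup>*\<^sup>* M M2 \<and>
              (\<forall>p. int (M2 p) = int (M p) + tokrep_ms N K p))" by (rule Suc.IH)
    moreover have "(\<forall>t. K1 t \<ge> 0) \<and> {t. K1 t \<noteq> 0} \<subseteq> B \<and> {t. K1 t \<noteq> 0} \<subseteq> T0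
      \<and> (\<forall>t. K1 t \<noteq> 0 \<longrightarrow> lab N t = None) \<and> (\<Sum>t\<in>B. K1 t) = int n
      \<and> (\<forall>p t. K1 t \<noteq> 0 \<and> pre N t p > 0 \<longrightarrow> int (M1 p) + tokrep_ms N K1 p \<ge> 0)"
    proof (intro conjI)
      show "\<forall>t. K1 t \<ge> 0" using h Kt unfolding K1_def by auto
      show "{t. K1 t \<noteq> 0} \<subseteq> B" using h tB unfolding K1_def by auto
      show "{t. K1 t \<noteq> 0} \<subseteq> T0" using h tA unfolding K1_def by auto
      show "\<forall>t. K1 t \<noteq> 0 \<longrightarrow> lab N t = None" using h tA unfolding K1_def by auto
      have "(\<Sum>w\<in>B. K1 w) = K1 t + (\<Sum>w\<in>B-{t}. K1 w)" by (rule sum.remove[OF finB tB])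
      moreover have "(\<Sum>w\<in>B. K w) = K t + (\<Sum>w\<in>B-{t}. K w)" by (rule sum.remove[OF finB tB])
      moreover have "(\<Sum>w\<in>B-{t}. K1 w) = (\<Sum>w\<in>B-{t}. K w)" by (rule sum.cong) (auto simp: K1_def)
      ultimately show "(\<Sum>t\<in>B. K1 t) = int n" using h by (simp add: K1_def)
      show "\<forall>p ta. K1 ta \<noteq> 0 \<and> pre N ta p > 0 \<longrightarrow> int (M1 p) + tokrep_ms N K1 p \<ge> 0"
      proof (intro allI impI)
        fix p ta assume a: "K1 ta \<noteq> 0 \<and> pre N ta p > 0"
        then have "K ta \<noteq> 0" using \<open>K t \<noteq> 0\<close> unfolding K1_def by (cases "ta = t") auto
        then have "int (M p) + tokrep_ms N K p \<ge> 0" using h a by auto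
        then show "int (M1 p) + tokrep_ms N K1 p \<ge> 0"
          unfolding M1_def using fire_int[OF en, of p] tokK[of p] by linarith
      qed
    qed
    ultimately obtain M2 where m2: "(\<lambda>x y. net_step N x None y)\<^sup>*\<^sup>* M1 M2"
      "\<forall>p. int (M2 p) = int (M1 p) + tokrep_ms N K1 p" by blast
    have "net_step N M None M1" unfolding net_step_def M1_def using en tA h by auto
    then have "(\<lambda>x y. net_step N x None y)\<^sup>*\<^sup>* M M2" using m2(1)
      by (rule converse_rtranclp_into_rtranclp)
    moreover have "\<forall>p. int (M2 p) = int (M p) + tokrep_ms N K p"
    proof
      fix p show "int (M2 p) = int (M p) + tokrep_ms N K p"
        using m2(2)[rule_format, of p] tokK[of p] fire_int[OF en, of p] unfolding M1_def by linarith
    qed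
    ultimately show "\<exists>M2. (\<lambda>x y. net_step N x None y)\<^sup>*\<^sup>* M M2 \<and>
              (\<forall>p. int (M2 p) = int (M p) + tokrep_ms N K p)" by blast
  qed
qed




lemma pw_snoc:
  assumes "zs \<noteq> []"
  shows "path_weight N (zs @ [y]) = path_weight N zs * flow N (last zs) y"
proof -
  obtain k where k: "length zs = Suc k" using assms by (cases zs) auto
  have "path_weight N (zs @ [y]) = (\<Prod>i<Suc k. flow N ((zs @ [y]) ! i) ((zs @ [y]) ! Suc i))"
    unfolding path_weight_def using k by simp
  also have "\<dots> = (\<Prod>i<k. flow N ((zs @ [y]) ! i) ((zs @ [y]) ! Suc i)) * flow N ((zs @ [y]) ! k) ((zs @ [y]) ! Suc k)"
    by simp
  also have "(\<Prod>i<k. flow N ((zs @ [y]) ! i) ((zs @ [y]) ! Suc i)) = (\<Prod>i<k. flow N (zs ! i) (zs ! Suc i))"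
    by (rule prod.cong) (use k in \<open>auto simp: nth_append\<close>)
  also have "(zs @ [y]) ! k = last zs" using k assms by (simp add: nth_append last_conv_nth)
  also have "(zs @ [y]) ! Suc k = y" using k by (simp add: nth_append)
  finally show ?thesis unfolding path_weight_def using k by simp
qed

lemma fp_snoc:
  assumes "faithful_path N Tp Sp (zs @ [y])" "zs \<noteq> []"
  shows "faithful_path N Tp Sp zs \<and> flow N (last zs) y > 0 \<and>
    (case last zs of Inr t \<Rightarrow> t \<in> Tp | Inl s \<Rightarrow> faithful_place N Tp Sp s)"
proof -
  obtain k where k: "length zs = Suc k" using assms(2) by (cases zs) auto
  have lz: "last zs = zs ! k" using k assms(2) by (simp add: last_conv_nth)
  have A: "\<forall>i. Suc i < length (zs@[y]) \<longrightarrow> flow N ((zs@[y]) ! i) ((zs@[y]) ! Suc i) > 0"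
    and B: "\<forall>i. Suc i < length (zs@[y]) \<longrightarrow> (case (zs@[y]) ! i of Inr t \<Rightarrow> t \<in> Tp | Inl s \<Rightarrow> faithful_place N Tp Sp s)"
    using assms(1) unfolding faithful_path_def is_path_def by auto
  have "faithful_path N Tp Sp zs"
    unfolding faithful_path_def is_path_def
  proof (intro conjI allI impI)
    show "zs \<noteq> []" by fact
    fix i assume i: "Suc i < length zs"
    show "flow N (zs ! i) (zs ! Suc i) > 0" using A[rule_format, of i] i by (simp add: nth_append)
  next
    fix i assume i: "Suc i < length zs"
    show "case zs ! i of Inr t \<Rightarrow> t \<in> Tp | Inl s \<Rightarrow> faithful_place N Tp Sp s"
      using B[rule_format, of i] i by (simp add: nth_append)
  qed
  moreover have "flow N (last zs) y > 0" using A[rule_format, of k] k lz by (simp add: nth_append)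
  moreover have "case last zs of Inr t \<Rightarrow> t \<in> Tp | Inl s \<Rightarrow> faithful_place N Tp Sp s"
    using B[rule_format, of k] k lz by (simp add: nth_append)
  ultimately show ?thesis by blast
qed

lemma flow_to_trans: "flow N x (Inr t) > 0 \<Longrightarrow> \<exists>q. x = Inl q \<and> pre N t q > 0"
  unfolding flow_def by (cases x) auto

lemma flow_to_place: "flow N x (Inl q) > 0 \<Longrightarrow> \<exists>v. x = Inr v \<and> post N v q > 0"
  unfolding flow_def by (cases x) auto

lemma flow_pt: "flow N (Inl q) (Inr t) = pre N t q" unfolding flow_def by simp
lemma flow_tp: "flow N (Inr v) (Inl q) = post N v q" unfolding flow_def by simp

lemma local_key:
  fixes H :: "'t \<Rightarrow> int"
  assumes fin: "finite {y. H y \<noteq> 0}"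
    and eq: "int (M q) = X q + tokrep_ms N H q"
    and nopre: "\<forall>y. H y < 0 \<longrightarrow> pre N y q = 0"
    and cases: "(c = 1 \<and> pre N x q \<le> M q) \<or> (H x > 0 \<and> c = H x)"
  shows "c * int (pre N x q) \<le> X q + (\<Sum>y\<in>{y. H y > 0}. H y * int (post N y q))"
proof -
  let ?P = "{y. H y > 0}" and ?Q = "{y. H y < 0}"
  have finP: "finite ?P" by (rule finite_subset[OF _ fin]) auto
  have finQ: "finite ?Q" by (rule finite_subset[OF _ fin]) auto
  have S: "{y. H y \<noteq> 0} = ?P \<union> ?Q" by auto
  have "tokrep_ms N H q = (\<Sum>y\<in>?P \<union> ?Q. H y * tokrep N y q)"
    unfolding tokrep_ms_def S ..
  also have "\<dots> = (\<Sum>y\<in>?P. H y * tokrep N y q) + (\<Sum>y\<in>?Q. H y * tokrep N y q)"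
    by (rule sum.union_disjoint) (use finP finQ in auto)
  finally have t1: "tokrep_ms N H q = (\<Sum>y\<in>?P. H y * tokrep N y q) + (\<Sum>y\<in>?Q. H y * tokrep N y q)" .
  have "(\<Sum>y\<in>?Q. H y * tokrep N y q) = (\<Sum>y\<in>?Q. H y * int (post N y q))"
    by (rule sum.cong) (use nopre in \<open>auto simp: tokrep_def\<close>)
  also have "\<dots> \<le> 0" by (rule sum_nonpos) (auto simp: mult_nonpos_nonneg)
  finally have t2: "(\<Sum>y\<in>?Q. H y * tokrep N y q) \<le> 0" .
  have t3: "(\<Sum>y\<in>?P. H y * tokrep N y q) = (\<Sum>y\<in>?P. H y * int (post N y q)) - (\<Sum>y\<in>?P. H y * int (pre N y q))"
    by (simp add: tokrep_def right_diff_distrib sum_subtractf)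
  have t4: "(\<Sum>y\<in>?P. H y * int (pre N y q)) \<ge> 0" by (rule sum_nonneg) auto
  show ?thesis
    using cases
  proof
    assume "c = 1 \<and> pre N x q \<le> M q"
    then show ?thesis using eq t1 t2 t3 t4 by simp
  next
    assume h: "H x > 0 \<and> c = H x"
    have "(\<Sum>y\<in>?P. H y * int (pre N y q)) \<ge> H x * int (pre N x q)"
      by (rule member_le_sum) (use h finP in auto)
    then show ?thesis using eq t1 t2 t3 h by simp
  qed
qed




lemma faithful_unique:
  assumes fp: "faithful_place N Tp Sp q" and v: "v \<in> Tp" "post N v q > 0"
  shows "q \<notin> Sp \<and> post N v q = 1 \<and> (\<forall>y\<in>Tp. y \<noteq> v \<longrightarrow> post N y q = 0)"
proof -
  let ?S = "{t \<in> Tp. post N t q > 0}"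
  have fin: "finite ?S" and eq: "(if q \<in> Sp then 1 else 0) + (\<Sum>t\<in>?S. post N t q) = (1::nat)"
    using fp unfolding faithful_place_def by auto
  have vS: "v \<in> ?S" using v by auto
  have sr: "(\<Sum>t\<in>?S. post N t q) = post N v q + (\<Sum>t\<in>?S-{v}. post N t q)"
    by (rule sum.remove[OF fin vS])
  have "q \<notin> Sp" using eq sr v(2) by (auto split: if_splits)
  moreover have "post N v q = 1" using eq sr v(2) by (auto split: if_splits)
  moreover have "(\<Sum>t\<in>?S-{v}. post N t q) = 0" using eq sr v(2) by (auto split: if_splits)
  then have "\<forall>y\<in>?S-{v}. post N y q = 0" using fin by simp
  then have "\<forall>y\<in>Tp. y \<noteq> v \<longrightarrow> post N y q = 0" by auto
  ultimately show ?thesis by blast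
qed

lemma faithful_source:
  assumes fp: "faithful_place N Tp Sp q" and "q \<in> Sp" and "y \<in> Tp"
  shows "post N y q = 0"
proof (rule ccontr)
  assume "post N y q \<noteq> 0"
  then have "q \<notin> Sp" using faithful_unique[OF fp \<open>y \<in> Tp\<close>] by simp
  then show False using assms by simp
qed

lemma path_bound:
  fixes H :: "'t \<Rightarrow> int" and X :: "'s \<Rightarrow> int" and N :: "('s, 't, 'a) pnet"
  assumes fin: "finite {y. H y \<noteq> 0}"
    and eq: "\<forall>q. int (M q) = X q + tokrep_ms N H q"
    and HposTp: "\<forall>y. H y > 0 \<longrightarrow> y \<in> Tp"
    and Hpos_t: "\<forall>y. H y > 0 \<longrightarrow> y \<noteq> t"
    and e: "\<forall>u y. H u < 0 \<and> H y > 0 \<longrightarrow> (\<forall>s. pre N u s = 0 \<or> pre N y s = 0)"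
    and f: "\<forall>u. H u < 0 \<longrightarrow> (\<forall>s. pre N u s = 0 \<or> pre N t s = 0)"
    and en: "\<forall>q. pre N t q \<le> M q"
    and Xz: "\<forall>q. q \<notin> Sp \<longrightarrow> X q = 0"
    and sSp: "s \<in> Sp"
  shows "\<forall>x. faithful_path N Tp Sp xs \<and> hd xs = Inl s \<and> last xs = Inr x \<and> (x = t \<or> H x > 0)
     \<longrightarrow> int (path_weight N xs) * (if x = t then 1 else H x) \<le> X s"
proof (induction xs rule: length_induct)
  case (1 xs)
  show ?case
  proof (intro allI impI)
    fix x assume a: "faithful_path N Tp Sp xs \<and> hd xs = Inl s \<and> last xs = Inr x \<and> (x = t \<or> H x > 0)"
    define c where "c = (if x = t then 1 else H x)"
    have cc: "(c = 1 \<and> pre N x q \<le> M q) \<or> (H x > 0 \<and> c = H x)" for q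
      using a en unfolding c_def by auto
    have cpos: "c > 0" using a unfolding c_def by auto
    have nopre: "\<forall>y. H y < 0 \<longrightarrow> pre N y q = 0" if "pre N x q > 0" for q
      using a e f that by (metis not_gr0)
    have key: "c * int (pre N x q) \<le> X q + (\<Sum>y\<in>{y. H y > 0}. H y * int (post N y q))"
      if "pre N x q > 0" for q
      using local_key[where H=H and M=M and q=q and X=X and N=N and c=c and x=x] fin eq nopre[OF that] cc[of q] by blast
    have xsne: "xs \<noteq> []" using a unfolding faithful_path_def is_path_def by auto
    define zs where "zs = butlast xs"
    have xs_eq: "xs = zs @ [Inr x]" using xsne a unfolding zs_def by (metis append_butlast_last_id)
    have zsne: "zs \<noteq> []" using xs_eq a by auto
    have hdz: "hd zs = Inl s" using xs_eq zsne a by simp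
    from fp_snoc[of N Tp Sp zs "Inr x"] xs_eq a zsne
    have fz: "faithful_path N Tp Sp zs" and fl: "flow N (last zs) (Inr x) > 0"
      and cz: "case last zs of Inr t \<Rightarrow> t \<in> Tp | Inl s \<Rightarrow> faithful_place N Tp Sp s" by auto
    obtain q where lq: "last zs = Inl q" and pq: "pre N x q > 0" using flow_to_trans[OF fl] by blast
    have fq: "faithful_place N Tp Sp q" using cz lq by simp
    have pwx: "path_weight N xs = path_weight N zs * pre N x q"
      using xs_eq pw_snoc[OF zsne, of N "Inr x"] lq by (simp add: flow_pt)
    define us where "us = butlast zs"
    have zs_eq: "zs = us @ [Inl q]" using zsne lq unfolding us_def by (metis append_butlast_last_id)
    show "int (path_weight N xs) * (if x = t then 1 else H x) \<le> X s"
    proof (cases "us = []")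
      case True
      then have zq: "zs = [Inl q]" using zs_eq by simp
      then have "q = s" using hdz by simp
      have pw1: "path_weight N zs = 1" using zq unfolding path_weight_def by simp
      have "\<forall>y\<in>{y. H y > 0}. H y * int (post N y q) = 0"
        using faithful_source[OF fq] \<open>q = s\<close> sSp HposTp by auto
      then have "(\<Sum>y\<in>{y. H y > 0}. H y * int (post N y q)) = 0" by simp
      then have "c * int (pre N x q) \<le> X s" using key[OF pq] \<open>q = s\<close> by simp
      then show ?thesis using pwx pw1 unfolding c_def by (simp add: mult.commute)
    next
      case False
      from fp_snoc[of N Tp Sp us "Inl q"] zs_eq fz False
      have fu: "faithful_path N Tp Sp us" and fl2: "flow N (last us) (Inl q) > 0"
        and cu: "case last us of Inr t \<Rightarrow> t \<in> Tp | Inl s \<Rightarrow> faithful_place N Tp Sp s" by auto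
      obtain v where lv: "last us = Inr v" and pv: "post N v q > 0" using flow_to_place[OF fl2] by blast
      have vTp: "v \<in> Tp" using cu lv by simp
      have U: "q \<notin> Sp \<and> post N v q = 1 \<and> (\<forall>y\<in>Tp. y \<noteq> v \<longrightarrow> post N y q = 0)"
        by (rule faithful_unique[OF fq vTp pv])
      have "(\<Sum>y\<in>{y. H y > 0}. H y * int (post N y q)) = (\<Sum>y\<in>{y. H y > 0}. if y = v then H v else 0)"
        by (rule sum.cong) (use U HposTp in auto)
      also have "\<dots> = (if v \<in> {y. H y > 0} then H v else 0)"
        by (rule sum.delta) (rule finite_subset[OF _ fin], auto)
      finally have sv: "(\<Sum>y\<in>{y. H y > 0}. H y * int (post N y q)) = (if H v > 0 then H v else 0)" by simp
      have "X q = 0" using Xz U by auto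
      then have k2: "c * int (pre N x q) \<le> (if H v > 0 then H v else 0)" using key[OF pq] sv by simp
      have "c * int (pre N x q) > 0" using cpos pq by simp
      then have Hv: "H v > 0" "c * int (pre N x q) \<le> H v" using k2 by (auto split: if_splits)
      have pwz: "path_weight N zs = path_weight N us" using zs_eq pw_snoc[OF False, of N "Inl q"] lv U by (simp add: flow_tp)
      have hdu: "hd us = Inl s" using hdz zs_eq False by simp
      have "length us < length xs" using xs_eq zs_eq by simp
      then have IH: "int (path_weight N us) * (if v = t then 1 else H v) \<le> X s"
        using 1 fu hdu lv Hv by blast
      have "v \<noteq> t" using Hpos_t Hv by auto
      then have IH': "int (path_weight N us) * H v \<le> X s" using IH by simp
      have "int (path_weight N xs) * c = int (path_weight N us) * (c * int (pre N x q))"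
        using pwx pwz by (simp add: algebra_simps)
      also have "\<dots> \<le> int (path_weight N us) * H v" using Hv(2) by (simp add: mult_left_mono)
      finally show ?thesis using IH' unfolding c_def by simp
    qed
  qed
qed




theorem theorem6p11:
  fixes N :: "('s, 't, 'a) pnet" and N' :: "('s, 'u, 'a) pnet"
    and Tp Tm :: "'t set" and NF :: "('t \<Rightarrow> int) set"
  assumes wfN: "wf_net N" and wfN': "wf_net N'" and plainN': "plain N'"
    and places_sub: "places N' \<subseteq> places N"
    and init_restr: "\<forall>s. init N' s = (if s \<in> places N' then init N s else 0)"
    and Tp_sub: "Tp \<subseteq> trans N" and Tm_sub: "Tm \<subseteq> trans N"
    and NF_sub: "\<forall>H \<in> NF. {t. H t \<noteq> 0} \<subseteq> trans N"
    and c1: "acyclic (flow_restr N Tp)"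
    and c2: "acyclic (flow_restr N Tm)"
    and c3: "\<forall>t \<in> trans N. lab N t \<noteq> None \<longrightarrow>
       (\<exists>t' \<in> trans N'. lab N' t' = lab N t \<and>
          (\<forall>s. enat (pre N' t' s) \<le>
               origins N Tp (places N' \<union> {s \<in> places N. init N s > 0}) (Inr t) s) \<and>
          (\<exists>G. fin_sms (trans N) G \<and> (\<forall>u. G u \<ge> 0) \<and> invisible N G \<and>
               tokrep N' t' = tokrep_ms N (\<lambda>u. (if u = t then 1 else 0) + G u)))"
    and c4: "\<exists>f :: 't \<Rightarrow> nat. (\<forall>t \<in> trans N. f t > 0) \<and>
       (\<forall>G. fin_sms (trans N) G \<and> invisible N G \<longrightarrow>
          (\<exists>H \<in> NF. fin_sms (trans N) H \<and> invisible N H \<and>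
             tokrep_ms N H = tokrep_ms N G \<and> fval f H = fval f G))"
    and c5: "\<forall>M'. reachable N' M' \<longrightarrow>
       (\<exists>HM. fin_sms Tp HM \<and> (\<forall>u. HM u \<ge> 0) \<and> invisible N HM \<and>
          (\<forall>H \<in> NF. \<forall>M. fin_sms (trans N) H \<and> reachable N M \<and>
             (\<forall>s. int (M s) = int (M' s) + (int (init N s) - int (init N' s)) + tokrep_ms N H s)
           \<longrightarrow>
             (let MM = (\<lambda>s. int (M' s) + (int (init N s) - int (init N' s)) + tokrep_ms N HM s) in
               (\<forall>s. MM s \<ge> 0) \<and>
               (\<forall>a t'. enabled N' M' t' \<and> lab N' t' = Some a \<longrightarrow>
                  (\<exists>t \<in> trans N. (\<forall>s. int (pre N t s) \<le> MM s) \<and> lab N t = Some a)) \<and>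
               (\<forall>u. H u \<le> HM u) \<and>
               (\<forall>u. H u < 0 \<longrightarrow> u \<in> Tm) \<and>
               (\<forall>u t. H u < 0 \<and> H t > 0 \<longrightarrow> (\<forall>s. pre N u s = 0 \<or> pre N t s = 0)) \<and>
               (\<forall>u t. H u < 0 \<and> enabled N M t \<and> lab N t \<noteq> None \<longrightarrow>
                  (\<forall>s. pre N u s = 0 \<or> pre N t s = 0)))))"
  shows "int_bbd_bisimilar N N'"
proof -
  obtain f where fpos: "\<forall>t\<in>trans N. f t > 0" and f4: "\<forall>G. fin_sms (trans N) G \<and> invisible N G \<longrightarrow>
          (\<exists>H \<in> NF. fin_sms (trans N) H \<and> invisible N H \<and>
             tokrep_ms N H = tokrep_ms N G \<and> fval f H = fval f G)" using c4 by blast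
  define R where "R = (\<lambda>M M'. reachable N M \<and> reachable N' M' \<and> (\<exists>H\<in>NF. fin_sms (trans N) H \<and> invisible N H \<and>
     (\<forall>s. int (M s) = int (M' s) + (int (init N s) - int (init N' s)) + tokrep_ms N H s)))"
  have finsms: "finite {t. G t \<noteq> 0}" if "fin_sms X G" for X and G :: "'t \<Rightarrow> int"
    using that unfolding fin_sms_def by auto
  have relI: "R M M'" if rr: "reachable N M" "reachable N' M'" "fin_sms (trans N) G" "invisible N G"
     "\<forall>s. int (M s) = int (M' s) + (int (init N s) - int (init N' s)) + tokrep_ms N G s" for M M' G
  proof -
    obtain H where "H \<in> NF" "fin_sms (trans N) H" "invisible N H" "tokrep_ms N H = tokrep_ms N G"
      using f4 rr(3,4) by blast
    then show ?thesis unfolding R_def using rr by auto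
  qed
  have Xnn: "int (M' s) + (int (init N s) - int (init N' s)) \<ge> 0" for M' :: "'s \<Rightarrow> nat" and s
    using init_restr by (auto split: if_splits)

  have Rinit: "R (init N) (init N')"
  proof (rule relI[where G = "\<lambda>_. 0"])
    show "reachable N (init N)" unfolding reachable_def by simp
    show "reachable N' (init N')" unfolding reachable_def by simp
    show "fin_sms (trans N) (\<lambda>_. 0)" unfolding fin_sms_def by simp
    show "invisible N (\<lambda>_. 0)" unfolding invisible_def by simp
    show "\<forall>s. int (init N s) = int (init N' s) + (int (init N s) - int (init N' s)) + tokrep_ms N (\<lambda>_. 0) s"
      unfolding tokrep_ms_def by simp
  qed

  have Tau: "R (fire N M t) M'" if hyp: "R M M'" "enabled N M t" "lab N t = None" for M M' t
  proof -
    from hyp(1) obtain H where H: "H \<in> NF" "fin_sms (trans N) H" "invisible N H"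
      "\<forall>s. int (M s) = int (M' s) + (int (init N s) - int (init N' s)) + tokrep_ms N H s"
      and r: "reachable N M" "reachable N' M'" unfolding R_def by blast
    have tT: "t \<in> trans N" using hyp(2) unfolding enabled_def by auto
    let ?d = "\<lambda>u. if u = t then 1 else (0::int)"
    have fd: "finite {u. ?d u \<noteq> 0}" by simp
    show ?thesis
    proof (rule relI[where G = "\<lambda>u. H u + ?d u"])
      show "reachable N (fire N M t)" using reach_step[OF r(1)] hyp(2) unfolding net_step_def by blast
      show "reachable N' M'" by fact
      have "{u. H u + ?d u \<noteq> 0} \<subseteq> {u. H u \<noteq> 0} \<union> {t}" by auto
      then show "fin_sms (trans N) (\<lambda>u. H u + ?d u)" using H(2) tT unfolding fin_sms_def
        by (meson finite.emptyI finite.insertI finite_Un finite_subset le_sup_iff insert_subset order_trans empty_subsetI)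
      show "invisible N (\<lambda>u. H u + ?d u)" using H(3) hyp(3) unfolding invisible_def by auto
      show "\<forall>s. int (fire N M t s) = int (M' s) + (int (init N s) - int (init N' s)) + tokrep_ms N (\<lambda>u. H u + ?d u) s"
      proof
        fix s
        have "tokrep_ms N (\<lambda>u. H u + ?d u) s = tokrep_ms N H s + tokrep N t s"
          using tokrep_ms_add[OF finsms[OF H(2)] fd, of N s] tokrep_ms_delta[of N t s] by simp
        then show "int (fire N M t s) = int (M' s) + (int (init N s) - int (init N' s)) + tokrep_ms N (\<lambda>u. H u + ?d u) s"
          using fire_int[OF hyp(2), of s] H(4) by simp
      qed
    qed
  qed

  have Vis: "R (fire N M t) (fire N' M' t')"
    if hyp: "R M M'" "enabled N M t" "lab N t = Some a" "enabled N' M' t'" "lab N' t' = Some a" for M M' t t' a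
  proof -
    from hyp(1) obtain H where H: "H \<in> NF" "fin_sms (trans N) H" "invisible N H"
      "\<forall>s. int (M s) = int (M' s) + (int (init N s) - int (init N' s)) + tokrep_ms N H s"
      and r: "reachable N M" "reachable N' M'" unfolding R_def by blast
    have tT: "t \<in> trans N" using hyp(2) unfolding enabled_def by auto
    have tT': "t' \<in> trans N'" using hyp(4) unfolding enabled_def by auto
    obtain t'' G where t'': "t'' \<in> trans N'" "lab N' t'' = lab N t" and G: "fin_sms (trans N) G" "\<forall>u. G u \<ge> 0"
      "invisible N G" "tokrep N' t'' = tokrep_ms N (\<lambda>u. (if u = t then 1 else 0) + G u)"
      using c3 tT hyp(3) by fastforce
    have "t'' = t'" using plainN' t'' tT' hyp(3,5) unfolding plain_def by (metis inj_onD)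
    let ?d = "\<lambda>u. if u = t then 1 else (0::int)"
    have fd: "finite {u. ?d u \<noteq> 0}" by simp
    show ?thesis
    proof (rule relI[where G = "\<lambda>u. H u - G u"])
      show "reachable N (fire N M t)" using reach_step[OF r(1)] hyp(2) unfolding net_step_def by blast
      show "reachable N' (fire N' M' t')" using reach_step[OF r(2)] hyp(4) unfolding net_step_def by blast
      have "{u. H u - G u \<noteq> 0} \<subseteq> {u. H u \<noteq> 0} \<union> {u. G u \<noteq> 0}" by auto
      then show "fin_sms (trans N) (\<lambda>u. H u - G u)" using H(2) G(1) unfolding fin_sms_def
        by (meson finite_Un finite_subset le_sup_iff order_trans)
      show "invisible N (\<lambda>u. H u - G u)" using H(3) G(3) unfolding invisible_def by (metis diff_self)
      show "\<forall>s. int (fire N M t s) = int (fire N' M' t' s) + (int (init N s) - int (init N' s)) + tokrep_ms N (\<lambda>u. H u - G u) s"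
      proof
        fix s
        have e1: "tokrep_ms N (\<lambda>u. H u - G u) s = tokrep_ms N H s - tokrep_ms N G s"
          by (rule tokrep_ms_diff[OF finsms[OF H(2)] finsms[OF G(1)]])
        have e2: "tokrep N' t' s = tokrep N t s + tokrep_ms N G s"
          using G(4) \<open>t'' = t'\<close> tokrep_ms_add[OF fd finsms[OF G(1)], of N s] tokrep_ms_delta[of N t s] by simp
        show "int (fire N M t s) = int (fire N' M' t' s) + (int (init N s) - int (init N' s)) + tokrep_ms N (\<lambda>u. H u - G u) s"
          using fire_int[OF hyp(2), of s] fire_int[OF hyp(4), of s] H(4) e1 e2 by simp
      qed
    qed
  qed

  define Sp where "Sp = places N' \<union> {s \<in> places N. init N s > 0}"

  have H1: "enabled N' M' t'" if hyp: "R M M'" "enabled N M t" "lab N t \<noteq> None" "t' \<in> trans N'"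
    "\<forall>s. enat (pre N' t' s) \<le> origins N Tp Sp (Inr t) s" for M M' t t'
  proof -
    from hyp(1) obtain H where H: "H \<in> NF" "fin_sms (trans N) H" "invisible N H"
      "\<forall>s. int (M s) = int (M' s) + (int (init N s) - int (init N' s)) + tokrep_ms N H s"
      and r: "reachable N M" "reachable N' M'" unfolding R_def by blast
    obtain HM where hm: "fin_sms Tp HM" "\<forall>u. HM u \<ge> 0" "invisible N HM"
      "\<forall>H \<in> NF. \<forall>M. fin_sms (trans N) H \<and> reachable N M \<and>
             (\<forall>s. int (M s) = int (M' s) + (int (init N s) - int (init N' s)) + tokrep_ms N H s)
           \<longrightarrow>
             (let MM = (\<lambda>s. int (M' s) + (int (init N s) - int (init N' s)) + tokrep_ms N HM s) in
               (\<forall>s. MM s \<ge> 0) \<and>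
               (\<forall>a t'. enabled N' M' t' \<and> lab N' t' = Some a \<longrightarrow>
                  (\<exists>t \<in> trans N. (\<forall>s. int (pre N t s) \<le> MM s) \<and> lab N t = Some a)) \<and>
               (\<forall>u. H u \<le> HM u) \<and>
               (\<forall>u. H u < 0 \<longrightarrow> u \<in> Tm) \<and>
               (\<forall>u t. H u < 0 \<and> H t > 0 \<longrightarrow> (\<forall>s. pre N u s = 0 \<or> pre N t s = 0)) \<and>
               (\<forall>u t. H u < 0 \<and> enabled N M t \<and> lab N t \<noteq> None \<longrightarrow>
                  (\<forall>s. pre N u s = 0 \<or> pre N t s = 0)))"
      using c5 r(2) by blast
    have P: "(\<forall>u. H u \<le> HM u) \<and>
               (\<forall>u t. H u < 0 \<and> H t > 0 \<longrightarrow> (\<forall>s. pre N u s = 0 \<or> pre N t s = 0)) \<and>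
               (\<forall>u t. H u < 0 \<and> enabled N M t \<and> lab N t \<noteq> None \<longrightarrow>
                  (\<forall>s. pre N u s = 0 \<or> pre N t s = 0))"
      using hm(4)[rule_format, OF H(1) conjI[OF H(2) conjI[OF r(1) H(4)]]] by (simp add: Let_def)
    have HposTp: "\<forall>y. H y > 0 \<longrightarrow> y \<in> Tp"
    proof (intro allI impI)
      fix y assume "H y > 0"
      then have "HM y \<noteq> 0" using P by (metis less_le_trans order.irrefl)
      then show "y \<in> Tp" using hm(1) unfolding fin_sms_def by auto
    qed
    have Hpos_t: "\<forall>y. H y > 0 \<longrightarrow> y \<noteq> t" using H(3) hyp(3) unfolding invisible_def by auto
    have fcond: "\<forall>u. H u < 0 \<longrightarrow> (\<forall>s. pre N u s = 0 \<or> pre N t s = 0)" using P hyp(2,3) by auto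
    have en: "\<forall>q. pre N t q \<le> M q" using hyp(2) unfolding enabled_def by auto
    have Xz: "\<forall>q. q \<notin> Sp \<longrightarrow> int (M' q) + (int (init N q) - int (init N' q)) = 0"
    proof (intro allI impI)
      fix q assume q: "q \<notin> Sp"
      then have "q \<notin> places N'" unfolding Sp_def by auto
      then have "M' q = 0" "init N' q = 0" using reach_zero[OF wfN' r(2)] init_restr by auto
      moreover have "init N q = 0" using q wfN unfolding Sp_def wf_net_def by auto
      ultimately show "int (M' q) + (int (init N q) - int (init N' q)) = 0" by simp
    qed
    show ?thesis unfolding enabled_def
    proof (intro conjI allI)
      show "t' \<in> trans N'" by fact
      fix s
      show "pre N' t' s \<le> M' s"
      proof (cases "pre N' t' s = 0")
        case True then show ?thesis by simp
      next
        case False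
        then have sP: "s \<in> places N'" using wfN' unfolding wf_net_def by auto
        then have sSp: "s \<in> Sp" unfolding Sp_def by auto
        let ?A = "{enat (path_weight N xs) | xs. faithful_path N Tp Sp xs \<and> hd xs = Inl s \<and> last xs = Inr t}"
        have "enat (pre N' t' s) \<le> Sup ?A" using hyp(5)[rule_format, of s] sSp unfolding origins_def by (simp only: if_P)
        moreover have "enat (pre N' t' s - 1) < enat (pre N' t' s)" using False by simp
        ultimately have "enat (pre N' t' s - 1) < Sup ?A" by (meson less_le_trans)
        then obtain xs where xs: "faithful_path N Tp Sp xs" "hd xs = Inl s" "last xs = Inr t"
          "enat (pre N' t' s - 1) < enat (path_weight N xs)"
          unfolding less_Sup_iff by blast
        then have w: "pre N' t' s \<le> path_weight N xs" using False by simp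
        have "int (path_weight N xs) * (if t = t then 1 else H t) \<le> int (M' s) + (int (init N s) - int (init N' s))"
          using path_bound[OF finsms[OF H(2)] H(4) HposTp Hpos_t P[THEN conjunct2, THEN conjunct1] fcond en Xz sSp] xs
          by blast
        moreover have "init N' s = init N s" using init_restr sP by simp
        ultimately show ?thesis using w by simp
      qed
    qed
  qed

  have hmget: "\<exists>HM. fin_sms Tp HM \<and> (\<forall>u. HM u \<ge> 0) \<and> invisible N HM \<and>
     (\<forall>H M. H \<in> NF \<longrightarrow> fin_sms (trans N) H \<longrightarrow> reachable N M \<longrightarrow>
             (\<forall>s. int (M s) = int (M' s) + (int (init N s) - int (init N' s)) + tokrep_ms N H s)
           \<longrightarrow>
               (\<forall>s. int (M' s) + (int (init N s) - int (init N' s)) + tokrep_ms N HM s \<ge> 0) \<and>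
               (\<forall>a t'. enabled N' M' t' \<and> lab N' t' = Some a \<longrightarrow>
                  (\<exists>t \<in> trans N. (\<forall>s. int (pre N t s) \<le> int (M' s) + (int (init N s) - int (init N' s)) + tokrep_ms N HM s) \<and> lab N t = Some a)) \<and>
               (\<forall>u. H u \<le> HM u) \<and>
               (\<forall>u. H u < 0 \<longrightarrow> u \<in> Tm) \<and>
               (\<forall>u t. H u < 0 \<and> H t > 0 \<longrightarrow> (\<forall>s. pre N u s = 0 \<or> pre N t s = 0)))"
    if rM: "reachable N' M'" for M'
  proof -
    obtain HM where hm: "fin_sms Tp HM" "\<forall>u. HM u \<ge> 0" "invisible N HM"
      "\<forall>H \<in> NF. \<forall>M. fin_sms (trans N) H \<and> reachable N M \<and>
             (\<forall>s. int (M s) = int (M' s) + (int (init N s) - int (init N' s)) + tokrep_ms N H s)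
           \<longrightarrow>
             (let MM = (\<lambda>s. int (M' s) + (int (init N s) - int (init N' s)) + tokrep_ms N HM s) in
               (\<forall>s. MM s \<ge> 0) \<and>
               (\<forall>a t'. enabled N' M' t' \<and> lab N' t' = Some a \<longrightarrow>
                  (\<exists>t \<in> trans N. (\<forall>s. int (pre N t s) \<le> MM s) \<and> lab N t = Some a)) \<and>
               (\<forall>u. H u \<le> HM u) \<and>
               (\<forall>u. H u < 0 \<longrightarrow> u \<in> Tm) \<and>
               (\<forall>u t. H u < 0 \<and> H t > 0 \<longrightarrow> (\<forall>s. pre N u s = 0 \<or> pre N t s = 0)) \<and>
               (\<forall>u t. H u < 0 \<and> enabled N M t \<and> lab N t \<noteq> None \<longrightarrow>
                  (\<forall>s. pre N u s = 0 \<or> pre N t s = 0)))"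
      using c5 rM by blast
    show ?thesis
    proof (rule exI[of _ HM], intro conjI)
      show "fin_sms Tp HM" "invisible N HM" by fact+
      show "\<forall>u. HM u \<ge> 0" using hm(2) by blast
    next
      show "\<forall>H M. H \<in> NF \<longrightarrow> fin_sms (trans N) H \<longrightarrow> reachable N M \<longrightarrow>
             (\<forall>s. int (M s) = int (M' s) + (int (init N s) - int (init N' s)) + tokrep_ms N H s)
           \<longrightarrow>
               (\<forall>s. int (M' s) + (int (init N s) - int (init N' s)) + tokrep_ms N HM s \<ge> 0) \<and>
               (\<forall>a t'. enabled N' M' t' \<and> lab N' t' = Some a \<longrightarrow>
                  (\<exists>t \<in> trans N. (\<forall>s. int (pre N t s) \<le> int (M' s) + (int (init N s) - int (init N' s)) + tokrep_ms N HM s) \<and> lab N t = Some a)) \<and>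
               (\<forall>u. H u \<le> HM u) \<and>
               (\<forall>u. H u < 0 \<longrightarrow> u \<in> Tm) \<and>
               (\<forall>u t. H u < 0 \<and> H t > 0 \<longrightarrow> (\<forall>s. pre N u s = 0 \<or> pre N t s = 0))"
      proof (intro allI impI)
        fix H M
        assume a: "H \<in> NF" "fin_sms (trans N) H" "reachable N M"
          "\<forall>s. int (M s) = int (M' s) + (int (init N s) - int (init N' s)) + tokrep_ms N H s"
        note L = hm(4)[rule_format, OF a(1) conjI[OF a(2) conjI[OF a(3) a(4)]], unfolded Let_def]
        from L show "(\<forall>s. int (M' s) + (int (init N s) - int (init N' s)) + tokrep_ms N HM s \<ge> 0) \<and>
               (\<forall>a t'. enabled N' M' t' \<and> lab N' t' = Some a \<longrightarrow>
                  (\<exists>t \<in> trans N. (\<forall>s. int (pre N t s) \<le> int (M' s) + (int (init N s) - int (init N' s)) + tokrep_ms N HM s) \<and> lab N t = Some a)) \<and>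
               (\<forall>u. H u \<le> HM u) \<and>
               (\<forall>u. H u < 0 \<longrightarrow> u \<in> Tm) \<and>
               (\<forall>u t. H u < 0 \<and> H t > 0 \<longrightarrow> (\<forall>s. pre N u s = 0 \<or> pre N t s = 0))"
          by (elim conjE) (intro conjI; assumption)
      qed
    qed
  qed

  have H2: "\<exists>M3 t. (\<lambda>x y. net_step N x None y)\<^sup>*\<^sup>* M M3 \<and> R M3 M' \<and> enabled N M3 t \<and> lab N t = Some a"
    if hyp: "R M M'" "enabled N' M' t'" "lab N' t' = Some a" for M M' t' a
  proof -
    from hyp(1) obtain H where H: "H \<in> NF" "fin_sms (trans N) H" "invisible N H"
      "\<forall>s. int (M s) = int (M' s) + (int (init N s) - int (init N' s)) + tokrep_ms N H s"
      and r: "reachable N M" "reachable N' M'" unfolding R_def by blast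
    obtain HM where hm: "fin_sms Tp HM" "\<forall>u. HM u \<ge> 0" "invisible N HM"
      "\<forall>H M. H \<in> NF \<longrightarrow> fin_sms (trans N) H \<longrightarrow> reachable N M \<longrightarrow>
             (\<forall>s. int (M s) = int (M' s) + (int (init N s) - int (init N' s)) + tokrep_ms N H s)
           \<longrightarrow>
               (\<forall>s. int (M' s) + (int (init N s) - int (init N' s)) + tokrep_ms N HM s \<ge> 0) \<and>
               (\<forall>a t'. enabled N' M' t' \<and> lab N' t' = Some a \<longrightarrow>
                  (\<exists>t \<in> trans N. (\<forall>s. int (pre N t s) \<le> int (M' s) + (int (init N s) - int (init N' s)) + tokrep_ms N HM s) \<and> lab N t = Some a)) \<and>
               (\<forall>u. H u \<le> HM u) \<and>
               (\<forall>u. H u < 0 \<longrightarrow> u \<in> Tm) \<and>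
               (\<forall>u t. H u < 0 \<and> H t > 0 \<longrightarrow> (\<forall>s. pre N u s = 0 \<or> pre N t s = 0))"
      using hmget[OF r(2)] by blast
    note L = hm(4)[rule_format, OF H(1) H(2) r(1) H(4)[rule_format]]
    have MMnn: "\<forall>s. int (M' s) + (int (init N s) - int (init N' s)) + tokrep_ms N HM s \<ge> 0" using L by (elim conjE) assumption
    obtain tv where tv: "tv \<in> trans N" "\<forall>s. int (pre N tv s) \<le> int (M' s) + (int (init N s) - int (init N' s)) + tokrep_ms N HM s"
      "lab N tv = Some a" using L hyp(2,3) by blast
    have HleHM: "\<forall>u. H u \<le> HM u" using L by (elim conjE) assumption
    have dd: "\<forall>u. H u < 0 \<longrightarrow> u \<in> Tm" using L by (elim conjE) assumption
    have ee: "\<forall>u t. H u < 0 \<and> H t > 0 \<longrightarrow> (\<forall>s. pre N u s = 0 \<or> pre N t s = 0)" using L by (elim conjE) assumption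
    define Hm where "Hm = (\<lambda>u. if H u < 0 then - H u else 0)"
    define Hp where "Hp = (\<lambda>u. if H u > 0 then H u else 0)"
    have finH: "finite {u. H u \<noteq> 0}" by (rule finsms[OF H(2)])
    have finHM: "finite {u. HM u \<noteq> 0}" by (rule finsms[OF hm(1)])
    have suppHm: "{u. Hm u \<noteq> 0} \<subseteq> {u. H u \<noteq> 0}" unfolding Hm_def by auto
    have suppHp: "{u. Hp u \<noteq> 0} \<subseteq> {u. H u \<noteq> 0}" unfolding Hp_def by auto
    have finHm: "finite {u. Hm u \<noteq> 0}" using finH suppHm finite_subset by blast
    have finHp: "finite {u. Hp u \<noteq> 0}" using finH suppHp finite_subset by blast
    have HHm: "(\<lambda>u. H u + Hm u) = Hp" unfolding Hm_def Hp_def by auto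
    have X0: "int (M' s) + (int (init N s) - int (init N' s)) \<ge> 0" for s by (rule Xnn)
    have ph1: "\<exists>M2. (\<lambda>x y. net_step N x None y)\<^sup>*\<^sup>* M M2 \<and> (\<forall>p. int (M2 p) = int (M p) + tokrep_ms N Hm p)"
    proof (rule fire_lemma[OF wfN c2 Tm_sub finH, rule_format, of Hm "nat (\<Sum>t\<in>{u. H u \<noteq> 0}. Hm t)" M], intro conjI)
      show "\<forall>t. Hm t \<ge> 0" unfolding Hm_def by auto
      show "{t. Hm t \<noteq> 0} \<subseteq> {u. H u \<noteq> 0}" by (rule suppHm)
      show "{t. Hm t \<noteq> 0} \<subseteq> Tm" using dd unfolding Hm_def by auto
      show "\<forall>t. Hm t \<noteq> 0 \<longrightarrow> lab N t = None" using H(3) unfolding Hm_def invisible_def by auto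
      have "(\<Sum>t\<in>{u. H u \<noteq> 0}. Hm t) \<ge> 0" by (rule sum_nonneg) (auto simp: Hm_def)
      then show "(\<Sum>t\<in>{u. H u \<noteq> 0}. Hm t) = int (nat (\<Sum>t\<in>{u. H u \<noteq> 0}. Hm t))" by simp
      show "\<forall>p t. Hm t \<noteq> 0 \<and> pre N t p > 0 \<longrightarrow> int (M p) + tokrep_ms N Hm p \<ge> 0"
      proof (intro allI impI)
        fix p u assume a: "Hm u \<noteq> 0 \<and> pre N u p > 0"
        then have Hu: "H u < 0" unfolding Hm_def by (auto split: if_splits)
        have "int (M p) + tokrep_ms N Hm p = int (M' p) + (int (init N p) - int (init N' p)) + tokrep_ms N Hp p"
          using H(4) tokrep_ms_add[OF finH finHm, of N p] HHm by simp
        moreover have "tokrep_ms N Hp p \<ge> 0"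
          unfolding tokrep_ms_def
        proof (rule sum_nonneg)
          fix y assume "y \<in> {t. Hp t \<noteq> 0}"
          then have "H y > 0" "Hp y = H y" unfolding Hp_def by (auto split: if_splits)
          then have "pre N y p = 0" using ee Hu a by (metis not_gr0)
          then show "Hp y * tokrep N y p \<ge> 0" using \<open>H y > 0\<close> \<open>Hp y = H y\<close> by (simp add: tokrep_def)
        qed
        ultimately show "int (M p) + tokrep_ms N Hm p \<ge> 0" using X0[of p] by simp
      qed
    qed
    then obtain M2 where M2: "(\<lambda>x y. net_step N x None y)\<^sup>*\<^sup>* M M2" "\<forall>p. int (M2 p) = int (M p) + tokrep_ms N Hm p"
      by blast
    have M2eq: "int (M2 p) = int (M' p) + (int (init N p) - int (init N' p)) + tokrep_ms N Hp p" for p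
      using M2(2) H(4) tokrep_ms_add[OF finH finHm, of N p] HHm by simp
    define K where "K = (\<lambda>u. HM u - Hp u)"
    have suppK: "{u. K u \<noteq> 0} \<subseteq> {u. HM u \<noteq> 0}"
    proof
      fix u assume "u \<in> {u. K u \<noteq> 0}"
      then show "u \<in> {u. HM u \<noteq> 0}" using HleHM[rule_format, of u] unfolding K_def Hp_def by (auto split: if_splits)
    qed
    have ph2: "\<exists>M3. (\<lambda>x y. net_step N x None y)\<^sup>*\<^sup>* M2 M3 \<and> (\<forall>p. int (M3 p) = int (M2 p) + tokrep_ms N K p)"
    proof (rule fire_lemma[OF wfN c1 Tp_sub finHM, rule_format, of K "nat (\<Sum>t\<in>{u. HM u \<noteq> 0}. K t)" M2], intro conjI)
      show "\<forall>t. K t \<ge> 0" using HleHM hm(2) unfolding K_def Hp_def by auto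
      show "{t. K t \<noteq> 0} \<subseteq> {u. HM u \<noteq> 0}" by (rule suppK)
      show "{t. K t \<noteq> 0} \<subseteq> Tp" using suppK hm(1) unfolding fin_sms_def by auto
      show "\<forall>t. K t \<noteq> 0 \<longrightarrow> lab N t = None" using suppK hm(3) unfolding invisible_def by auto
      have "(\<Sum>t\<in>{u. HM u \<noteq> 0}. K t) \<ge> 0" by (rule sum_nonneg) (use HleHM hm(2) in \<open>auto simp: K_def Hp_def\<close>)
      then show "(\<Sum>t\<in>{u. HM u \<noteq> 0}. K t) = int (nat (\<Sum>t\<in>{u. HM u \<noteq> 0}. K t))" by simp
      show "\<forall>p t. K t \<noteq> 0 \<and> pre N t p > 0 \<longrightarrow> int (M2 p) + tokrep_ms N K p \<ge> 0"
      proof (intro allI impI)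
        fix p u
        have "tokrep_ms N K p = tokrep_ms N HM p - tokrep_ms N Hp p"
          unfolding K_def by (rule tokrep_ms_diff[OF finHM finHp])
        then show "int (M2 p) + tokrep_ms N K p \<ge> 0" using M2eq[of p] MMnn[rule_format, of p] by linarith
      qed
    qed
    then obtain M3 where M3: "(\<lambda>x y. net_step N x None y)\<^sup>*\<^sup>* M2 M3" "\<forall>p. int (M3 p) = int (M2 p) + tokrep_ms N K p"
      by blast
    have M3eq: "int (M3 p) = int (M' p) + (int (init N p) - int (init N' p)) + tokrep_ms N HM p" for p
    proof -
      have "tokrep_ms N K p = tokrep_ms N HM p - tokrep_ms N Hp p"
        unfolding K_def by (rule tokrep_ms_diff[OF finHM finHp])
      then show ?thesis using M3(2) M2eq[of p] by simp
    qed
    have tau: "(\<lambda>x y. net_step N x None y)\<^sup>*\<^sup>* M M3" using M2(1) M3(1) by (rule rtranclp_trans)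
    have reach3: "reachable N M3" by (rule reach_taus[OF tau r(1)])
    have "fin_sms (trans N) HM" using hm(1) Tp_sub unfolding fin_sms_def by auto
    then have "R M3 M'" using relI[OF reach3 r(2) _ hm(3)] M3eq by blast
    moreover have "enabled N M3 tv" unfolding enabled_def
    proof (intro conjI allI)
      show "tv \<in> trans N" by fact
      fix s show "pre N tv s \<le> M3 s" using tv(2)[rule_format, of s] M3eq[of s] by linarith
    qed
    ultimately show ?thesis using tau tv(3) by blast
  qed

  have Div: False if hyp: "R p q" "\<forall>k. net_step N (ps k) None (ps (Suc k))" "\<forall>k. R (ps k) q" for p q ps
  proof -
    from hyp(3) obtain H0 where H0: "H0 \<in> NF" "fin_sms (trans N) H0" "invisible N H0"
      "\<forall>s. int (ps 0 s) = int (q s) + (int (init N s) - int (init N' s)) + tokrep_ms N H0 s"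
      and rq: "reachable N' q" unfolding R_def by blast
    obtain HM where hm: "fin_sms Tp HM" "\<forall>u. HM u \<ge> 0" "invisible N HM"
      "\<forall>H M. H \<in> NF \<longrightarrow> fin_sms (trans N) H \<longrightarrow> reachable N M \<longrightarrow>
             (\<forall>s. int (M s) = int (q s) + (int (init N s) - int (init N' s)) + tokrep_ms N H s)
           \<longrightarrow>
               (\<forall>s. int (q s) + (int (init N s) - int (init N' s)) + tokrep_ms N HM s \<ge> 0) \<and>
               (\<forall>a t'. enabled N' q t' \<and> lab N' t' = Some a \<longrightarrow>
                  (\<exists>t \<in> trans N. (\<forall>s. int (pre N t s) \<le> int (q s) + (int (init N s) - int (init N' s)) + tokrep_ms N HM s) \<and> lab N t = Some a)) \<and>
               (\<forall>u. H u \<le> HM u) \<and>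
               (\<forall>u. H u < 0 \<longrightarrow> u \<in> Tm) \<and>
               (\<forall>u t. H u < 0 \<and> H t > 0 \<longrightarrow> (\<forall>s. pre N u s = 0 \<or> pre N t s = 0))"
      using hmget[OF rq] by blast
    have claim: "\<exists>G. fin_sms (trans N) G \<and> invisible N G \<and>
       (\<forall>s. int (ps k s) = int (q s) + (int (init N s) - int (init N' s)) + tokrep_ms N G s) \<and>
       fval f G \<ge> fval f H0 + int k" for k
    proof (induction k)
      case 0 then show ?case using H0 by auto
    next
      case (Suc k)
      then obtain G where G: "fin_sms (trans N) G" "invisible N G"
       "\<forall>s. int (ps k s) = int (q s) + (int (init N s) - int (init N' s)) + tokrep_ms N G s"
       "fval f G \<ge> fval f H0 + int k" by blast
      obtain u where u: "enabled N (ps k) u" "lab N u = None" "ps (Suc k) = fire N (ps k) u"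
        using hyp(2) unfolding net_step_def by blast
      have uT: "u \<in> trans N" using u(1) unfolding enabled_def by auto
      let ?d = "\<lambda>v. if v = u then 1 else (0::int)"
      have fd: "finite {v. ?d v \<noteq> 0}" by simp
      have finG: "finite {v. G v \<noteq> 0}" by (rule finsms[OF G(1)])
      show ?case
      proof (rule exI[of _ "\<lambda>v. G v + ?d v"], intro conjI)
        have "{v. G v + ?d v \<noteq> 0} \<subseteq> {v. G v \<noteq> 0} \<union> {u}" by auto
        then show "fin_sms (trans N) (\<lambda>v. G v + ?d v)" using G(1) uT unfolding fin_sms_def
          by (meson finite.emptyI finite.insertI finite_Un finite_subset le_sup_iff insert_subset order_trans empty_subsetI)
        show "invisible N (\<lambda>v. G v + ?d v)" using G(2) u(2) unfolding invisible_def by auto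
        show "\<forall>s. int (ps (Suc k) s) = int (q s) + (int (init N s) - int (init N' s)) + tokrep_ms N (\<lambda>v. G v + ?d v) s"
        proof
          fix s
          have "tokrep_ms N (\<lambda>v. G v + ?d v) s = tokrep_ms N G s + tokrep N u s"
            using tokrep_ms_add[OF finG fd, of N s] tokrep_ms_delta[of N u s] by simp
          then show "int (ps (Suc k) s) = int (q s) + (int (init N s) - int (init N' s)) + tokrep_ms N (\<lambda>v. G v + ?d v) s"
            using u(3) fire_int[OF u(1), of s] G(3) by simp
        qed
        have "fval f (\<lambda>v. G v + ?d v) = fval f G + int (f u)"
          using fval_add[OF finG fd, of f] fval_delta[of f u] by simp
        moreover have "f u > 0" using fpos uT by auto
        ultimately show "fval f (\<lambda>v. G v + ?d v) \<ge> fval f H0 + int (Suc k)" using G(4) by simp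
      qed
    qed
    define k where "k = nat (fval f HM - fval f H0) + 1"
    obtain G where G: "fin_sms (trans N) G" "invisible N G"
       "\<forall>s. int (ps k s) = int (q s) + (int (init N s) - int (init N' s)) + tokrep_ms N G s"
       "fval f G \<ge> fval f H0 + int k" using claim by blast
    obtain H where H: "H \<in> NF" "fin_sms (trans N) H" "tokrep_ms N H = tokrep_ms N G" "fval f H = fval f G"
      using f4 G(1,2) by blast
    have rk: "reachable N (ps k)" using hyp(3) unfolding R_def by blast
    have eqk: "\<forall>s. int (ps k s) = int (q s) + (int (init N s) - int (init N' s)) + tokrep_ms N H s"
      using G(3) H(3) by simp
    have "\<forall>u. H u \<le> HM u" using hm(4)[rule_format, OF H(1) H(2) rk eqk[rule_format]] by blast
    then have "fval f H \<le> fval f HM" by (rule fval_mono[OF finsms[OF H(2)] finsms[OF hm(1)]])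
    then show False using G(4) H(4) unfolding k_def by linarith
  qed

  have noTau': False if "net_step N' M' None M2" for M' M2
    using that plainN' unfolding net_step_def plain_def enabled_def by blast

  have T1: "bb_transfer (net_step N) (net_step N') R"
    unfolding bb_transfer_def
  proof (intro conjI allI impI)
    fix p q \<alpha> p'
    assume a: "R p q \<and> net_step N p \<alpha> p'"
    then obtain t where t: "enabled N p t" "lab N t = \<alpha>" "p' = fire N p t" unfolding net_step_def by blast
    show "\<alpha> = None \<and> R p' q \<or>
        (\<exists>q1 q2. (\<lambda>x y. net_step N' x None y)\<^sup>*\<^sup>* q q1 \<and> net_step N' q1 \<alpha> q2 \<and> R p q1 \<and> R p' q2)"
    proof (cases \<alpha>)
      case None
      then show ?thesis using Tau a t by blast
    next
      case (Some b)
      have tT: "t \<in> trans N" using t(1) unfolding enabled_def by auto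
      obtain t' where t': "t' \<in> trans N'" "lab N' t' = lab N t"
        "\<forall>s. enat (pre N' t' s) \<le> origins N Tp Sp (Inr t) s"
        using c3 tT t(2) Some unfolding Sp_def by blast
      have en': "enabled N' q t'" using H1[OF _ t(1) _ t'(1) t'(3)] a t(2) Some by blast
      have "net_step N' q \<alpha> (fire N' q t')" unfolding net_step_def using en' t'(2) t(2) by blast
      moreover have "R p' (fire N' q t')" using Vis[OF _ t(1) _ en'] a t t'(2) Some by auto
      ultimately show ?thesis using a by blast
    qed
  next
    fix p q ps
    assume "R p q \<and> ps 0 = p \<and> (\<forall>k. net_step N (ps k) None (ps (Suc k))) \<and> (\<forall>k. R (ps k) q)"
    then have False using Div by blast
    then show "\<exists>qs. qs 0 = q \<and> (\<forall>l. net_step N' (qs l) None (qs (Suc l))) \<and> (\<forall>k l. R (ps k) (qs l))" ..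
  qed

  have T2: "bb_transfer (net_step N') (net_step N) (conversep R)"
    unfolding bb_transfer_def
  proof (intro conjI allI impI)
    fix p q \<alpha> p'
    assume a: "conversep R p q \<and> net_step N' p \<alpha> p'"
    then obtain t' where t': "enabled N' p t'" "lab N' t' = \<alpha>" "p' = fire N' p t'" unfolding net_step_def by blast
    obtain b where b: "\<alpha> = Some b" using a noTau' by (cases \<alpha>) auto
    have Rqp: "R q p" using a by simp
    obtain M3 t where m3: "(\<lambda>x y. net_step N x None y)\<^sup>*\<^sup>* q M3" "R M3 p" "enabled N M3 t" "lab N t = Some b"
      using H2[OF Rqp t'(1)] t'(2) b by blast
    have "net_step N M3 \<alpha> (fire N M3 t)" unfolding net_step_def using m3 b by blast
    moreover have "R (fire N M3 t) p'" using Vis[OF m3(2) m3(3) m3(4) t'(1)] t' b by simp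
    ultimately show "\<alpha> = None \<and> conversep R p' q \<or>
        (\<exists>q1 q2. (\<lambda>x y. net_step N x None y)\<^sup>*\<^sup>* q q1 \<and> net_step N q1 \<alpha> q2 \<and> conversep R p q1 \<and> conversep R p' q2)"
      using m3 by auto
  next
    fix p q ps
    assume "conversep R p q \<and> ps 0 = p \<and> (\<forall>k. net_step N' (ps k) None (ps (Suc k))) \<and> (\<forall>k. conversep R (ps k) q)"
    then have False using noTau' by blast
    then show "\<exists>qs. qs 0 = q \<and> (\<forall>l. net_step N (qs l) None (qs (Suc l))) \<and> (\<forall>k l. conversep R (ps k) (qs l))" ..
  qed

  show ?thesis unfolding int_bbd_bisimilar_def bbd_bisim_def using T1 T2 Rinit by blast
qed


end
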